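(* Let $I$ be a closed ideal of $A^+$ and let $f\in A^+$ with $f|_\Gamma\in I^A$. Then the division ideal $I(f)=\{g\in A^+: fg\in I\}$ is weak-$*$ closed in $A^+$.
   Context: $\Gamma$ is the unit circle, $A(\Gamma)$ the algebra of continuous functions on $\Gamma$ with absolutely convergent Fourier series, $A^+=\{f\in A(\Gamma):\hat f(n)=0\ (n<0)\}$. $I^A$ is the closed ideal of $A(\Gamma)$ generated by $I$. The weak-$*$ topology on $A^+$ is obtained by identifying $A^+$ via $f\mapsto(\hat f(n))_{n\ge0}$ with $\ell^1(\mathbb N)$, the dual of $c_0(\mathbb N)$. *)

theory Defs
  imports "HOL-Analysis.Analysis"
begin

text \<open>Model: an element of the Wiener algebra A(Gamma) is identified with its sequence of
Fourier coefficients (int => complex), an absolutely summable sequence; the function on the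
circle is z |-> sum_n a n * z^n.  Multiplication of functions corresponds to convolution.\<close>

definition Wiener :: "(int \<Rightarrow> complex) set" where
  "Wiener = {a. (\<lambda>n. norm (a n)) summable_on UNIV}"

definition Wnorm :: "(int \<Rightarrow> complex) \<Rightarrow> real" where
  "Wnorm a = (\<Sum>\<^sub>\<infinity>n. norm (a n))"

definition conv :: "(int \<Rightarrow> complex) \<Rightarrow> (int \<Rightarrow> complex) \<Rightarrow> (int \<Rightarrow> complex)" where
  "conv a b = (\<lambda>n. \<Sum>\<^sub>\<infinity>k. a k * b (n - k))"

definition Aplus :: "(int \<Rightarrow> complex) set" where
  "Aplus = {a \<in> Wiener. \<forall>n<0. a n = 0}"

definition Wclosed :: "(int \<Rightarrow> complex) set \<Rightarrow> bool" where
  "Wclosed S \<longleftrightarrow> (\<forall>x a. (\<forall>k. x k \<in> S) \<longrightarrow> a \<in> Wiener \<longrightarrow>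
      (\<lambda>k. Wnorm (\<lambda>n. x k n - a n)) \<longlonglongrightarrow> 0 \<longrightarrow> a \<in> S)"

definition closed_ideal_Aplus :: "(int \<Rightarrow> complex) set \<Rightarrow> bool" where
  "closed_ideal_Aplus I \<longleftrightarrow> I \<subseteq> Aplus \<and> (\<lambda>n. 0) \<in> I \<and>
     (\<forall>a\<in>I. \<forall>b\<in>I. (\<lambda>n. a n + b n) \<in> I) \<and>
     (\<forall>c. \<forall>a\<in>I. (\<lambda>n. c * a n) \<in> I) \<and>
     (\<forall>g\<in>Aplus. \<forall>a\<in>I. conv g a \<in> I) \<and> Wclosed I"

definition closed_ideal_A :: "(int \<Rightarrow> complex) set \<Rightarrow> bool" where
  "closed_ideal_A J \<longleftrightarrow> J \<subseteq> Wiener \<and> (\<lambda>n. 0) \<in> J \<and>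
     (\<forall>a\<in>J. \<forall>b\<in>J. (\<lambda>n. a n + b n) \<in> J) \<and>
     (\<forall>c. \<forall>a\<in>J. (\<lambda>n. c * a n) \<in> J) \<and>
     (\<forall>g\<in>Wiener. \<forall>a\<in>J. conv g a \<in> J) \<and> Wclosed J"

definition IA :: "(int \<Rightarrow> complex) set \<Rightarrow> (int \<Rightarrow> complex) set" where
  "IA I = \<Inter>{J. closed_ideal_A J \<and> I \<subseteq> J}"

definition div_ideal :: "(int \<Rightarrow> complex) set \<Rightarrow> (int \<Rightarrow> complex) \<Rightarrow> (int \<Rightarrow> complex) set" where
  "div_ideal I f = {g \<in> Aplus. conv f g \<in> I}"

text \<open>l^1(N) and its weak-* topology as the dual of c_0(N): the coarsest topology on l^1(N)
making all functionals x |-> sum_n x n * c n (c in c_0) continuous.\<close>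
definition l1N :: "(nat \<Rightarrow> complex) set" where
  "l1N = {x. (\<lambda>n. norm (x n)) summable_on UNIV}"

definition weakstar_l1N :: "(nat \<Rightarrow> complex) topology" where
  "weakstar_l1N = subtopology
     (topology_generated_by {{x. (\<Sum>\<^sub>\<infinity>n. x n * c n) \<in> U} | c U. c \<longlonglongrightarrow> 0 \<and> open U}) l1N"

definition coeffs_plus :: "(int \<Rightarrow> complex) \<Rightarrow> (nat \<Rightarrow> complex)" where
  "coeffs_plus f = (\<lambda>n. f (int n))"

end

theory Submission
  imports Defs "HOL-Library.Nat_Bijection"
begin


lemma W_summ: "x \<in> Wiener \<Longrightarrow> x summable_on UNIV"
  unfolding Wiener_def using summable_on_iff_abs_summable_on_complex by blast

lemma Wnorm_nonneg: "0 \<le> Wnorm x"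
  unfolding Wnorm_def by (rule infsum_nonneg) simp

lemma W_add: assumes "x \<in> Wiener" "y \<in> Wiener" shows "(\<lambda>n. x n + y n) \<in> Wiener"
proof -
  have "(\<lambda>n. norm (x n) + norm (y n)) summable_on UNIV"
    using assms unfolding Wiener_def by (intro summable_on_add) auto
  then show ?thesis unfolding Wiener_def mem_Collect_eq
    by (rule summable_on_comparison_test) (auto simp: norm_triangle_ineq)
qed

lemma W_scale: assumes "x \<in> Wiener" shows "(\<lambda>n. c * x n) \<in> Wiener"
  using assms unfolding Wiener_def by (simp add: norm_mult summable_on_cmult_right)

lemma W_diff: assumes "x \<in> Wiener" "y \<in> Wiener" shows "(\<lambda>n. x n - y n) \<in> Wiener"
  using W_add[OF assms(1) W_scale[OF assms(2), of "-1"]] by simp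

lemma Wnorm_add: assumes "x \<in> Wiener" "y \<in> Wiener"
  shows "Wnorm (\<lambda>n. x n + y n) \<le> Wnorm x + Wnorm y"
proof -
  have "Wnorm (\<lambda>n. x n + y n) \<le> (\<Sum>\<^sub>\<infinity>n. norm (x n) + norm (y n))"
    unfolding Wnorm_def using W_add[OF assms] assms unfolding Wiener_def
    by (intro infsum_mono summable_on_add) (auto simp: norm_triangle_ineq)
  also have "\<dots> = Wnorm x + Wnorm y" unfolding Wnorm_def
    using assms unfolding Wiener_def by (intro infsum_add) auto
  finally show ?thesis .
qed

lemma Wnorm_scale: "Wnorm (\<lambda>n. c * x n) = norm c * Wnorm x"
  unfolding Wnorm_def by (simp add: norm_mult infsum_cmult_right')

lemma norm_le_Wnorm: assumes "x \<in> Wiener" shows "norm (x n) \<le> Wnorm x"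
proof -
  have "(\<Sum>\<^sub>\<infinity>m\<in>{n}. norm (x m)) \<le> (\<Sum>\<^sub>\<infinity>m. norm (x m))"
    using assms unfolding Wiener_def by (intro infsum_mono_neutral) auto
  then show ?thesis unfolding Wnorm_def by simp
qed

lemma Wnorm_minus_commute: "Wnorm (\<lambda>n. x n - y n) = Wnorm (\<lambda>n. y n - x n)"
  unfolding Wnorm_def by (simp add: norm_minus_commute)


lemma PRODS: assumes "F \<in> Wiener" "G \<in> Wiener"
  shows "(\<lambda>p. norm (F (fst p)) * norm (G (snd p))) summable_on UNIV"
proof -
  let ?f = "\<lambda>p. norm (F (fst p)) * norm (G (snd p))"
  have "?f summable_on Sigma UNIV (\<lambda>_. UNIV)"
  proof (rule summable_on_SigmaI)
    fix x :: int
    show "((\<lambda>y. ?f (x, y)) has_sum (norm (F x) * Wnorm G)) UNIV"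
      using assms(2) unfolding Wiener_def Wnorm_def
      by (simp add: has_sum_cmult_right)
  next
    show "(\<lambda>x. norm (F x) * Wnorm G) summable_on UNIV"
      using assms(1) unfolding Wiener_def by (simp add: summable_on_cmult_left)
  qed auto
  then show ?thesis by simp
qed

lemma CONV_summ: assumes "F \<in> Wiener" "G \<in> Wiener"
  shows "(\<lambda>k. norm (F k * G (n - k))) summable_on UNIV"
proof -
  have "(\<lambda>k. norm (F k) * Wnorm G) summable_on UNIV"
    using assms(1) unfolding Wiener_def by (simp add: summable_on_cmult_left)
  then show ?thesis
    by (rule summable_on_comparison_test)
       (auto simp: norm_mult intro!: mult_left_mono norm_le_Wnorm assms)
qed

lemma reindex_summ:
  fixes Q :: "'a \<times> 'b \<Rightarrow> real" and h :: "'c \<Rightarrow> 'a \<times> 'b"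
  assumes "Q summable_on UNIV" "inj h"
  shows "(\<lambda>p. Q (h p)) summable_on UNIV"
proof -
  have "Q summable_on (h ` UNIV)" using assms(1) by (rule summable_on_subset_banach) auto
  then show ?thesis using summable_on_reindex[of h UNIV Q] assms(2) by (simp add: o_def)
qed

lemma CONVW: assumes "F \<in> Wiener" "G \<in> Wiener" shows "conv F G \<in> Wiener"
proof -
  define Q where "Q = (\<lambda>p::int\<times>int. norm (F (fst p)) * norm (G (snd p)))"
  have Q: "Q summable_on UNIV" unfolding Q_def by (rule PRODS[OF assms])
  have inj: "inj (\<lambda>(n::int,k::int). (k, n - k))"
    by (auto simp: inj_def)
  have "(\<lambda>p. Q ((\<lambda>(n::int,k::int). (k, n - k)) p)) summable_on UNIV"
    by (rule reindex_summ[OF Q inj])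
  then have S: "(\<lambda>(n,k). norm (F k) * norm (G (n - k))) summable_on Sigma UNIV (\<lambda>_. UNIV)"
    unfolding Q_def by (simp add: case_prod_unfold)
  have "(\<lambda>n. \<Sum>\<^sub>\<infinity>k. norm (F k) * norm (G (n - k))) summable_on UNIV"
    using summable_on_Sigma_banach[OF S] by simp
  then show ?thesis unfolding Wiener_def mem_Collect_eq
  proof (rule summable_on_comparison_test)
    fix n
    show "norm (conv F G n) \<le> (\<Sum>\<^sub>\<infinity>k. norm (F k) * norm (G (n - k)))"
      unfolding conv_def using norm_infsum_bound[OF CONV_summ[OF assms, of n]]
      by (simp add: norm_mult)
  qed simp
qed

definition T :: "(nat \<Rightarrow> complex) \<Rightarrow> (int \<Rightarrow> complex) \<Rightarrow> int \<Rightarrow> complex" where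
  "T \<phi> x j = (\<Sum>\<^sub>\<infinity>n. \<phi> n * x (int n - j))"

lemma T_summ: assumes "\<And>n. norm (\<phi> n) \<le> B" "x \<in> Wiener"
  shows "(\<lambda>n. norm (\<phi> n * x (int n - j))) summable_on UNIV"
    and "norm (T \<phi> x j) \<le> B * Wnorm x"
proof -
  have inj: "inj (\<lambda>n::nat. int n - j)" by (auto simp: inj_def)
  have xs: "(\<lambda>n. norm (x n)) summable_on UNIV" using assms(2) unfolding Wiener_def by simp
  have "(\<lambda>n. norm (x n)) summable_on range (\<lambda>n::nat. int n - j)"
    using xs by (rule summable_on_subset_banach) auto
  then have xs2: "(\<lambda>n::nat. norm (x (int n - j))) summable_on UNIV"
    using summable_on_reindex[OF inj, of "\<lambda>n. norm (x n)"] by (simp add: o_def)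
  have B0: "0 \<le> B" using assms(1)[of 0] norm_ge_zero[of "\<phi> 0"] by linarith
  show S: "(\<lambda>n. norm (\<phi> n * x (int n - j))) summable_on UNIV"
    using summable_on_cmult_right[OF xs2, of B]
    by (rule summable_on_comparison_test) (auto simp: norm_mult intro!: mult_right_mono assms(1))
  have "norm (T \<phi> x j) \<le> (\<Sum>\<^sub>\<infinity>n. norm (\<phi> n * x (int n - j)))"
    unfolding T_def by (rule norm_infsum_bound[OF S])
  also have "\<dots> \<le> (\<Sum>\<^sub>\<infinity>n. B * norm (x (int n - j)))"
    by (rule infsum_mono[OF S summable_on_cmult_right[OF xs2]])
       (auto simp: norm_mult intro!: mult_right_mono assms(1))
  also have "\<dots> = B * (\<Sum>\<^sub>\<infinity>n. norm (x (int n - j)))" by (simp add: infsum_cmult_right')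
  also have "(\<Sum>\<^sub>\<infinity>n. norm (x (int n - j))) \<le> Wnorm x"
  proof -
    have "(\<Sum>\<^sub>\<infinity>n. norm (x (int n - j))) = (\<Sum>\<^sub>\<infinity>n\<in>range (\<lambda>n::nat. int n - j). norm (x n))"
      using infsum_reindex[OF inj, of "\<lambda>n. norm (x n)"] by (simp add: o_def)
    also have "\<dots> \<le> Wnorm x" unfolding Wnorm_def
      by (rule infsum_mono_neutral) (use xs summable_on_subset_banach[OF xs] in auto)
    finally show ?thesis .
  qed
  then have "B * (\<Sum>\<^sub>\<infinity>n. norm (x (int n - j))) \<le> B * Wnorm x" using B0 by (rule mult_left_mono)
  finally show "norm (T \<phi> x j) \<le> B * Wnorm x" .
qed

lemma FUB: assumes "\<And>n. norm (\<phi> n) \<le> B" "F \<in> Wiener" "G \<in> Wiener"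
  shows "(\<Sum>\<^sub>\<infinity>n. \<phi> n * conv F G (int n - m)) = (\<Sum>\<^sub>\<infinity>k. F k * T \<phi> G (m + k))"
proof -
  define f where "f = (\<lambda>(n::nat) (k::int). \<phi> n * (F k * G (int n - m - k)))"
  define Q where "Q = (\<lambda>p::int\<times>int. norm (F (fst p)) * norm (G (snd p)))"
  have Q: "Q summable_on UNIV" unfolding Q_def by (rule PRODS[OF assms(2,3)])
  have inj: "inj (\<lambda>(n::nat,k::int). (k, int n - m - k))"
    by (auto simp: inj_def)
  have Qh: "(\<lambda>p. Q ((\<lambda>(n::nat,k::int). (k, int n - m - k)) p)) summable_on UNIV"
    by (rule reindex_summ[OF Q inj])
  have "(\<lambda>p. norm ((\<lambda>(x, y). f x y) p)) summable_on UNIV"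
    using summable_on_cmult_right[OF Qh, of B]
    by (rule summable_on_comparison_test)
       (auto simp: f_def Q_def norm_mult intro!: mult_right_mono assms(1))
  then have fs: "(\<lambda>(x, y). f x y) summable_on UNIV \<times> UNIV"
    using abs_summable_summable by simp
  have "(\<Sum>\<^sub>\<infinity>n. \<phi> n * conv F G (int n - m)) = (\<Sum>\<^sub>\<infinity>n. \<Sum>\<^sub>\<infinity>k. f n k)"
    unfolding conv_def f_def infsum_cmult_right'[symmetric] by (simp add: algebra_simps)
  also have "\<dots> = (\<Sum>\<^sub>\<infinity>k. \<Sum>\<^sub>\<infinity>n. f n k)"
    by (rule infsum_swap_banach[OF fs])
  also have "\<dots> = (\<Sum>\<^sub>\<infinity>k. F k * T \<phi> G (m + k))"
    unfolding T_def f_def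
    by (simp add: infsum_cmult_right'[symmetric] algebra_simps)
  finally show ?thesis .
qed


lemma conv_comm: "conv F G = conv G F"
proof
  fix n
  have b: "bij_betw (\<lambda>k. n - k) UNIV (UNIV::int set)"
    by (rule bij_betwI[of _ _ _ "\<lambda>k. n - k"]) auto
  show "conv F G n = conv G F n"
    unfolding conv_def using infsum_reindex_bij_betw[OF b, of "\<lambda>k. F k * G (n - k)"]
    by (simp add: mult.commute)
qed

lemma Aplus_W: "x \<in> Aplus \<Longrightarrow> x \<in> Wiener" unfolding Aplus_def by simp
lemma Aplus_neg: "x \<in> Aplus \<Longrightarrow> n < 0 \<Longrightarrow> x n = 0" unfolding Aplus_def by simp

lemma Aplus_conv: assumes "F \<in> Aplus" "G \<in> Aplus" shows "conv F G \<in> Aplus"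
proof -
  have "conv F G n = 0" if "n < 0" for n
  proof -
    have "F k * G (n - k) = 0" for k
      using that assms by (cases "k < 0") (auto simp: Aplus_neg)
    then show ?thesis unfolding conv_def by (intro infsum_0) simp
  qed
  then show ?thesis unfolding Aplus_def using CONVW[OF Aplus_W[OF assms(1)] Aplus_W[OF assms(2)]] by auto
qed

lemma int_nat_infsum:
  fixes y :: "int \<Rightarrow> 'a::{comm_monoid_add, t2_space}"
  assumes "\<And>i. i < 0 \<Longrightarrow> y i = 0"
  shows "infsum y UNIV = infsum (\<lambda>k. y (int k)) UNIV"
proof -
  have "infsum y UNIV = infsum y (range int)"
    by (rule infsum_cong_neutral) (auto simp: assms image_iff, metis assms nonneg_int_cases not_le)
  also have "\<dots> = infsum (\<lambda>k. y (int k)) UNIV"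
    using infsum_reindex[of int UNIV y] by (simp add: o_def)
  finally show ?thesis .
qed

lemma int_nat_summable:
  fixes y :: "int \<Rightarrow> 'a::banach"
  assumes "y summable_on UNIV"
  shows "(\<lambda>k. y (int k)) summable_on UNIV"
proof -
  have "y summable_on range int" using assms by (rule summable_on_subset_banach) auto
  then show ?thesis using summable_on_reindex[of int UNIV y] by (simp add: o_def)
qed

lemma nat_partial_lim:
  fixes c :: "nat \<Rightarrow> 'a::banach"
  assumes "c summable_on UNIV"
  shows "(\<lambda>N. sum c {..<N}) \<longlonglongrightarrow> infsum c UNIV"
  using has_sum_imp_sums[OF has_sum_infsum[OF assms]] unfolding sums_def .

definition tl_of :: "(int \<Rightarrow> complex) \<Rightarrow> nat \<Rightarrow> (int \<Rightarrow> complex)" where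
  "tl_of x N = (\<lambda>i. if 0 \<le> i \<and> i < int N then 0 else x i)"

lemma tail_lim: assumes "x \<in> Aplus" shows "(\<lambda>N. Wnorm (tl_of x N)) \<longlonglongrightarrow> 0"
proof -
  let ?a = "\<lambda>i. norm (x i)"
  have xs: "?a summable_on UNIV" using assms unfolding Aplus_def Wiener_def by simp
  have eq: "Wnorm (tl_of x N) = Wnorm x - (\<Sum>k<N. norm (x (int k)))" for N
  proof -
    let ?S = "{0..<int N}"
    have "Wnorm x = infsum ?a (?S \<union> (UNIV - ?S))" unfolding Wnorm_def by simp
    also have "\<dots> = infsum ?a ?S + infsum ?a (UNIV - ?S)"
      by (rule infsum_Un_disjoint) (auto intro: summable_on_subset_banach[OF xs])
    also have "infsum ?a ?S = (\<Sum>k<N. norm (x (int k)))"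
    proof -
      have "?S = int ` {..<N}" by (auto simp: image_iff) (metis lessThan_iff nat_less_iff nonneg_int_cases of_nat_less_iff)
      then show ?thesis by (simp add: sum.reindex)
    qed
    also have "infsum ?a (UNIV - ?S) = Wnorm (tl_of x N)"
      unfolding Wnorm_def tl_of_def by (rule infsum_cong_neutral) auto
    finally show ?thesis by simp
  qed
  have "(\<lambda>N. \<Sum>k<N. norm (x (int k))) \<longlonglongrightarrow> infsum (\<lambda>k. norm (x (int k))) UNIV"
    by (rule nat_partial_lim[OF int_nat_summable[OF xs]])
  moreover have "infsum (\<lambda>k. norm (x (int k))) UNIV = Wnorm x"
    unfolding Wnorm_def by (rule int_nat_infsum[symmetric]) (use assms in \<open>auto simp: Aplus_neg\<close>)
  ultimately have "(\<lambda>N. Wnorm x - (\<Sum>k<N. norm (x (int k)))) \<longlonglongrightarrow> Wnorm x - Wnorm x"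
    by (intro tendsto_diff) auto
  then show ?thesis unfolding eq by simp
qed


definition vv :: "nat \<Rightarrow> int \<Rightarrow> complex" where
  "vv j = (\<lambda>i. if i = int (j div 2) then (if even j then 1 else \<i>) else 0)"

definition lin :: "(nat \<Rightarrow> real) \<Rightarrow> nat \<Rightarrow> int \<Rightarrow> complex" where
  "lin s N = (\<lambda>i. \<Sum>j<N. of_real (s j) * vv j i)"

definition YY :: "(int \<Rightarrow> complex) \<Rightarrow> (int \<Rightarrow> complex) \<Rightarrow> real \<Rightarrow> (nat \<Rightarrow> real) \<Rightarrow> nat \<Rightarrow> int \<Rightarrow> complex" where
  "YY h m t s N = (\<lambda>i. m i + of_real t * h i + lin s N i)"

definition good :: "(int \<Rightarrow> complex) set \<Rightarrow> (int \<Rightarrow> complex) \<Rightarrow> real \<Rightarrow> (nat \<Rightarrow> real) \<Rightarrow> nat \<Rightarrow> bool" where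
  "good M h d a N \<longleftrightarrow> (\<forall>m\<in>M. \<forall>t s. t * d + (\<Sum>j<N. s j * a j) \<le> Wnorm (YY h m t s N))"

lemma vv_W: "vv j \<in> Wiener"
proof -
  have "(\<lambda>i. norm (vv j i)) summable_on {int (j div 2)}" by simp
  then have "(\<lambda>i. norm (vv j i)) summable_on UNIV"
    by (rule summable_on_cong_neutral[THEN iffD1, rotated -1]) (auto simp: vv_def)
  then show ?thesis unfolding Wiener_def by simp
qed

lemma lin_W: "lin s N \<in> Wiener"
proof (induction N)
  case 0
  then show ?case by (simp add: lin_def Wiener_def)
next
  case (Suc N)
  have "lin s (Suc N) = (\<lambda>i. lin s N i + of_real (s N) * vv N i)"
    by (simp add: lin_def)
  then show ?case using W_add[OF Suc W_scale[OF vv_W]] by simp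
qed

lemma YY_W: "m \<in> Wiener \<Longrightarrow> h \<in> Wiener \<Longrightarrow> YY h m t s N \<in> Wiener"
  unfolding YY_def by (intro W_add W_scale lin_W)

lemma YY_scale: "YY h (\<lambda>i. of_real c * m i) (c * t) (\<lambda>j. c * s j) N = (\<lambda>i. of_real c * YY h m t s N i)"
  by (simp add: YY_def lin_def algebra_simps sum_distrib_left)

lemma YY_add: "YY h (\<lambda>i. m1 i + m2 i) (t1 + t2) (\<lambda>j. s1 j + s2 j) N = (\<lambda>i. YY h m1 t1 s1 N i + YY h m2 t2 s2 N i)"
  by (simp add: YY_def lin_def algebra_simps sum.distrib)

lemma YY_Suc: "YY h m t s (Suc N) = (\<lambda>i. YY h m t s N i + of_real (s N) * vv N i)"
  by (simp add: YY_def lin_def algebra_simps)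

lemma good_cong: assumes "\<And>j. j < N \<Longrightarrow> a j = b j" shows "good M h d a N = good M h d b N"
proof -
  have "\<And>s. (\<Sum>j<N. s j * a j) = (\<Sum>j<N. s j * b j)" using assms by (intro sum.cong) auto
  then show ?thesis unfolding good_def by simp
qed

locale HBset =
  fixes M :: "(int \<Rightarrow> complex) set" and h :: "int \<Rightarrow> complex" and d :: real
  assumes MW: "M \<subseteq> Wiener" and hW: "h \<in> Wiener"
    and M0: "(\<lambda>n. 0) \<in> M"
    and Madd: "\<And>a b. a \<in> M \<Longrightarrow> b \<in> M \<Longrightarrow> (\<lambda>n. a n + b n) \<in> M"
    and Mscale: "\<And>c a. a \<in> M \<Longrightarrow> (\<lambda>n. c * a n) \<in> M"
    and dpos: "0 < d"
    and dist: "\<And>m. m \<in> M \<Longrightarrow> d \<le> Wnorm (\<lambda>n. m n + h n)"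
begin

lemma good0: "good M h d a 0"
  unfolding good_def
proof (intro ballI allI)
  fix m t s assume m: "m \<in> M"
  show "t * d + (\<Sum>j<0. s j * a j) \<le> Wnorm (YY h m t s 0)"
  proof (cases "t > 0")
    case True
    have "d \<le> Wnorm (\<lambda>n. (\<lambda>n. of_real (1/t) * m n) n + h n)"
      using dist Mscale m by blast
    then have "t * d \<le> t * Wnorm (\<lambda>n. of_real (1/t) * m n + h n)"
      using True by simp
    also have "t * Wnorm (\<lambda>n. of_real (1/t) * m n + h n) = Wnorm (\<lambda>n. of_real t * (of_real (1/t) * m n + h n))"
      using True by (simp add: Wnorm_scale)
    also have "(\<lambda>n. of_real t * (of_real (1/t) * m n + h n)) = YY h m t s 0"
      using True by (auto simp: YY_def lin_def algebra_simps)
    finally show ?thesis by simp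
  next
    case False
    then have "t * d \<le> 0" using dpos by (simp add: mult_nonpos_nonneg)
    then show ?thesis using Wnorm_nonneg[of "YY h m t s 0"] by simp
  qed
qed

lemma good_step:
  assumes g: "good M h d a N"
  shows "\<exists>r. good M h d (a(N := r)) (Suc N)"
proof -
  define val where "val = (\<lambda>t s. t * d + (\<Sum>j<N. s j * a j))"
  define lo where "lo = (\<lambda>m t s. val t s - Wnorm (\<lambda>i. YY h m t s N i - vv N i))"
  define up where "up = (\<lambda>m t s. Wnorm (\<lambda>i. YY h m t s N i + vv N i) - val t s)"
  have key: "lo m1 t1 s1 \<le> up m2 t2 s2" if "m1 \<in> M" "m2 \<in> M" for m1 t1 s1 m2 t2 s2
  proof -
    have "val t1 s1 + val t2 s2 = val (t1 + t2) (\<lambda>j. s1 j + s2 j)"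
      unfolding val_def by (simp add: algebra_simps sum.distrib)
    also have "\<dots> \<le> Wnorm (YY h (\<lambda>i. m1 i + m2 i) (t1 + t2) (\<lambda>j. s1 j + s2 j) N)"
      unfolding val_def using g[unfolded good_def, rule_format, OF Madd[OF that], of "t1+t2" "\<lambda>j. s1 j + s2 j"] by simp
    also have "YY h (\<lambda>i. m1 i + m2 i) (t1 + t2) (\<lambda>j. s1 j + s2 j) N
        = (\<lambda>i. (YY h m1 t1 s1 N i - vv N i) + (YY h m2 t2 s2 N i + vv N i))"
      unfolding YY_add by simp
    also have "Wnorm \<dots> \<le> Wnorm (\<lambda>i. YY h m1 t1 s1 N i - vv N i) + Wnorm (\<lambda>i. YY h m2 t2 s2 N i + vv N i)"
      using that MW hW by (intro Wnorm_add W_diff W_add YY_W vv_W) auto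
    finally show ?thesis unfolding lo_def up_def by simp
  qed
  define L where "L = {lo m t s | m t s. m \<in> M}"
  define r where "r = Sup L"
  have Lne: "L \<noteq> {}" unfolding L_def using M0 by blast
  have bdd: "bdd_above L" unfolding L_def bdd_above_def using key M0 by blast
  have lo_r: "lo m t s \<le> r" if "m \<in> M" for m t s
    unfolding r_def using that bdd by (intro cSup_upper) (auto simp: L_def)
  have r_up: "r \<le> up m t s" if "m \<in> M" for m t s
    unfolding r_def using Lne key that by (intro cSup_least) (auto simp: L_def)
  have "good M h d (a(N := r)) (Suc N)"
    unfolding good_def
  proof (intro ballI allI)
    fix m t s assume m: "m \<in> M"
    have sumeq: "(\<Sum>j<Suc N. s j * (a(N := r)) j) = val t s - t * d + s N * r"
    proof -
      have "(\<Sum>j<N. s j * (a(N := r)) j) = (\<Sum>j<N. s j * a j)" by (intro sum.cong) auto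
      then show ?thesis unfolding val_def by simp
    qed
    define y where "y = YY h m t s N"
    define \<sigma> where "\<sigma> = s N"
    have Yeq: "YY h m t s (Suc N) = (\<lambda>i. y i + of_real \<sigma> * vv N i)"
      unfolding y_def \<sigma>_def YY_Suc ..
    have yW: "y \<in> Wiener" unfolding y_def using m MW hW by (intro YY_W) auto
    show "t * d + (\<Sum>j<Suc N. s j * (a(N := r)) j) \<le> Wnorm (YY h m t s (Suc N))"
      unfolding sumeq Yeq
    proof -
      consider "\<sigma> = 0" | "\<sigma> > 0" | "\<sigma> < 0" by linarith
      then show "t * d + (val t s - t * d + s N * r) \<le> Wnorm (\<lambda>i. y i + of_real \<sigma> * vv N i)"
      proof cases
        case 1
        then show ?thesis using g m unfolding good_def val_def y_def \<sigma>_def by simp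
      next
        case 2
        define c where "c = 1 / \<sigma>"
        have c: "c > 0" "c * \<sigma> = 1" using 2 by (auto simp: c_def)
        have "r \<le> up (\<lambda>i. of_real c * m i) (c * t) (\<lambda>j. c * s j)"
          using r_up Mscale m by blast
        also have "\<dots> = Wnorm (\<lambda>i. of_real c * (y i + of_real \<sigma> * vv N i)) - c * val t s"
        proof -
          have "(\<lambda>i. of_real c * y i + vv N i) = (\<lambda>i. of_real c * (y i + of_real \<sigma> * vv N i))"
          proof
            fix i
            have "of_real c * (of_real \<sigma> * vv N i) = (of_real (c * \<sigma>) :: complex) * vv N i"
              by simp
            moreover have "(of_real \<sigma> * of_real c :: complex) = 1"
              using c by (metis mult.commute of_real_1 of_real_mult)
            ultimately show "of_real c * y i + vv N i = of_real c * (y i + of_real \<sigma> * vv N i)"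
              using c by (simp add: algebra_simps)
          qed
          then show ?thesis
            unfolding up_def YY_scale y_def val_def
            by (simp add: algebra_simps sum_distrib_left)
        qed
        also have "\<dots> = c * (Wnorm (\<lambda>i. y i + of_real \<sigma> * vv N i) - val t s)"
          by (subst Wnorm_scale) (use c in \<open>simp add: right_diff_distrib\<close>)
        finally have "\<sigma> * r \<le> \<sigma> * (c * (Wnorm (\<lambda>i. y i + of_real \<sigma> * vv N i) - val t s))"
          using 2 by simp
        also have "\<dots> = (c * \<sigma>) * (Wnorm (\<lambda>i. y i + of_real \<sigma> * vv N i) - val t s)"
          by (simp only: mult.assoc mult.left_commute)
        finally have "\<sigma> * r \<le> Wnorm (\<lambda>i. y i + of_real \<sigma> * vv N i) - val t s"
          using c by simp
        then show ?thesis unfolding \<sigma>_def by (simp add: algebra_simps)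
      next
        case 3
        define c where "c = - 1 / \<sigma>"
        have c: "c > 0" "c * \<sigma> = -1" using 3 by (auto simp: c_def)
        have "lo (\<lambda>i. of_real c * m i) (c * t) (\<lambda>j. c * s j) \<le> r"
          using lo_r Mscale m by blast
        moreover have "lo (\<lambda>i. of_real c * m i) (c * t) (\<lambda>j. c * s j)
            = c * val t s - Wnorm (\<lambda>i. of_real c * (y i + of_real \<sigma> * vv N i))"
        proof -
          have "(\<lambda>i. of_real c * y i - vv N i) = (\<lambda>i. of_real c * (y i + of_real \<sigma> * vv N i))"
          proof
            fix i
            have "of_real c * (of_real \<sigma> * vv N i) = (of_real (c * \<sigma>) :: complex) * vv N i"
              by simp
            moreover have "(of_real \<sigma> * of_real c :: complex) = -1"
              using c by (metis mult.commute of_real_1 of_real_mult of_real_minus)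
            ultimately show "of_real c * y i - vv N i = of_real c * (y i + of_real \<sigma> * vv N i)"
              using c by (simp add: algebra_simps)
          qed
          then show ?thesis
            unfolding lo_def YY_scale y_def val_def
            by (simp add: algebra_simps sum_distrib_left)
        qed
        moreover have "Wnorm (\<lambda>i. of_real c * (y i + of_real \<sigma> * vv N i)) = c * Wnorm (\<lambda>i. y i + of_real \<sigma> * vv N i)"
          using c by (simp add: Wnorm_scale)
        ultimately have "c * val t s - c * Wnorm (\<lambda>i. y i + of_real \<sigma> * vv N i) \<le> r" by simp
        then have "\<sigma> * (c * val t s - c * Wnorm (\<lambda>i. y i + of_real \<sigma> * vv N i)) \<ge> \<sigma> * r"
          using 3 by (simp add: mult_le_cancel_left)
        also have "\<sigma> * (c * val t s - c * Wnorm (\<lambda>i. y i + of_real \<sigma> * vv N i))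
           = (c * \<sigma>) * (val t s - Wnorm (\<lambda>i. y i + of_real \<sigma> * vv N i))"
          by (simp add: algebra_simps)
        finally have "\<sigma> * r \<le> Wnorm (\<lambda>i. y i + of_real \<sigma> * vv N i) - val t s"
          using c by simp
        then show ?thesis unfolding \<sigma>_def by (simp add: algebra_simps)
      qed
    qed
  qed
  then show ?thesis by blast
qed

lemma good_seq: "\<exists>A. \<forall>N. good M h d A N"
proof -
  have "\<exists>f. \<forall>n. good M h d (f n) n \<and> (\<forall>j<n. f (Suc n) j = f n j)"
  proof (rule dependent_nat_choice)
    show "\<exists>x. good M h d x 0" using good0 by blast
  next
    fix x n assume "good M h d x n"
    then obtain r where "good M h d (x(n := r)) (Suc n)" using good_step by blast
    then show "\<exists>y. good M h d y (Suc n) \<and> (\<forall>j<n. y j = x j)" by (intro exI[of _ "x(n := r)"]) auto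
  qed
  then obtain f where f: "\<And>n. good M h d (f n) n" "\<And>n j. j < n \<Longrightarrow> f (Suc n) j = f n j" by blast
  define A where "A j = f (Suc j) j" for j
  have fA: "j < n \<Longrightarrow> f n j = A j" for n j
  proof (induction n)
    case 0 then show ?case by simp
  next
    case (Suc n)
    then show ?case by (cases "j < n") (auto simp: f(2) A_def less_Suc_eq)
  qed
  have "good M h d A N" for N
    using f(1)[of N] good_cong[of N "f N" A] fA by blast
  then show ?thesis by blast
qed

end


lemma vv_even: "vv (2*k) = (\<lambda>i. if i = int k then 1 else 0)"
  by (simp add: vv_def)
lemma vv_odd: "vv (Suc (2*k)) = (\<lambda>i. if i = int k then \<i> else 0)"
  by (simp add: vv_def)

definition sx :: "(int \<Rightarrow> complex) \<Rightarrow> nat \<Rightarrow> real" where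
  "sx x j = (if even j then Re (x (int (j div 2))) else Im (x (int (j div 2))))"

definition phi :: "(nat \<Rightarrow> real) \<Rightarrow> nat \<Rightarrow> complex" where
  "phi A k = of_real (A (2*k)) - \<i> * of_real (A (Suc (2*k)))"

lemma lin_sx: "lin (sx x) (2*N) = (\<lambda>i. if 0 \<le> i \<and> i < int N then x i else 0)"
proof (induction N)
  case 0 then show ?case by (auto simp add: lin_def fun_eq_iff)
next
  case (Suc N)
  have "lin (sx x) (2 * Suc N) = (\<lambda>i. lin (sx x) (2*N) i + of_real (sx x (2*N)) * vv (2*N) i
          + of_real (sx x (Suc (2*N))) * vv (Suc (2*N)) i)"
    by (simp add: lin_def)
  also have "\<dots> = (\<lambda>i. (if 0 \<le> i \<and> i < int N then x i else 0) + (if i = int N then x i else 0))"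
  proof
    fix i
    show "lin (sx x) (2*N) i + of_real (sx x (2*N)) * vv (2*N) i
          + of_real (sx x (Suc (2*N))) * vv (Suc (2*N)) i =
          (if 0 \<le> i \<and> i < int N then x i else 0) + (if i = int N then x i else 0)"
      unfolding Suc vv_even vv_odd sx_def
      by (cases "i = int N") (simp_all add: complex_eq_iff)
  qed
  also have "\<dots> = (\<lambda>i. if 0 \<le> i \<and> i < int (Suc N) then x i else 0)"
    by (auto simp: fun_eq_iff)
  finally show ?case .
qed

lemma lin_neg: "lin (\<lambda>j. - s j) N = (\<lambda>i. - lin s N i)"
  by (simp add: lin_def sum_negf)

lemma sum_sx: "(\<Sum>j<2*N. sx x j * A j) = Re (\<Sum>k<N. phi A k * x (int k))"
proof (induction N)
  case 0 then show ?case by simp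
next
  case (Suc N)
  have "(\<Sum>j<2*Suc N. sx x j * A j) = (\<Sum>j<2*N. sx x j * A j) + sx x (2*N) * A (2*N) + sx x (Suc (2*N)) * A (Suc (2*N))"
    by simp
  then show ?case using Suc by (simp add: sx_def phi_def algebra_simps)
qed

lemma Wnorm_vv: "Wnorm (vv j) = 1"
proof -
  have "Wnorm (vv j) = (\<Sum>\<^sub>\<infinity>i\<in>{int (j div 2)}. norm (vv j i))"
    unfolding Wnorm_def by (rule infsum_cong_neutral) (auto simp: vv_def)
  then show ?thesis by (simp add: vv_def)
qed

context HBset
begin

lemma HB2:
  assumes A: "\<And>N. good M h d A N" and MA: "M \<subseteq> Aplus" and hA: "h \<in> Aplus"
  shows "\<exists>\<phi>. (\<forall>k. norm (\<phi> k) \<le> 2) \<and> (\<forall>m\<in>M. (\<Sum>\<^sub>\<infinity>k. \<phi> k * m (int k)) = 0)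
          \<and> (\<Sum>\<^sub>\<infinity>k. \<phi> k * h (int k)) \<noteq> 0"
proof -
  have G1: "\<bar>t * d + (\<Sum>j<N. s j * A j)\<bar> \<le> Wnorm (YY h m t s N)" if m: "m \<in> M" for m t s N
  proof -
    have up: "t * d + (\<Sum>j<N. s j * A j) \<le> Wnorm (YY h m t s N)"
      using A[of N] m unfolding good_def by blast
    have "(-1) * t * d + (\<Sum>j<N. (-1) * s j * A j) \<le> Wnorm (YY h (\<lambda>i. of_real (-1) * m i) ((-1) * t) (\<lambda>j. (-1) * s j) N)"
      using A[of N, unfolded good_def, rule_format, OF Mscale[OF m, of "of_real (-1)"], of "(-1)*t" "\<lambda>j. (-1) * s j"] by simp
    also have "\<dots> = Wnorm (YY h m t s N)"
      unfolding YY_scale Wnorm_scale by simp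
    finally have "- (t * d + (\<Sum>j<N. s j * A j)) \<le> Wnorm (YY h m t s N)"
      by (simp add: sum_negf)
    then show ?thesis using up by linarith
  qed
  have Abnd: "\<bar>A j\<bar> \<le> 1" for j
  proof -
    have "\<bar>0 * d + (\<Sum>i<Suc j. (if i = j then 1 else 0) * A i)\<bar> \<le> Wnorm (YY h (\<lambda>n. 0) 0 (\<lambda>i. if i = j then 1 else 0) (Suc j))"
      by (rule G1[OF M0])
    moreover have "YY h (\<lambda>n. 0) 0 (\<lambda>i. if i = j then 1 else 0) (Suc j) = vv j"
      by (simp add: YY_def lin_def fun_eq_iff if_distrib cong: if_cong)
    ultimately show ?thesis by (simp add: Wnorm_vv)
  qed
  define \<phi> where "\<phi> = phi A"
  have pb: "norm (\<phi> k) \<le> 2" for k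
  proof -
    have "norm (\<phi> k) \<le> norm (of_real (A (2*k)) :: complex) + norm (\<i> * of_real (A (Suc (2*k))))"
      unfolding \<phi>_def phi_def by (rule norm_triangle_ineq4)
    also have "\<dots> \<le> 1 + 1" using Abnd[of "2*k"] Abnd[of "Suc (2*k)"] by (intro add_mono) (auto simp: norm_mult)
    finally show ?thesis by simp
  qed
  have lim: "(\<lambda>N. Re (\<Sum>k<N. \<phi> k * x (int k))) \<longlonglongrightarrow> Re (\<Sum>\<^sub>\<infinity>k. \<phi> k * x (int k))"
    if "x \<in> Wiener" for x
  proof -
    have "(\<lambda>n. norm (\<phi> n * x (int n - 0))) summable_on UNIV"
      by (rule T_summ(1)[OF pb that])
    then have "(\<lambda>k. \<phi> k * x (int k)) summable_on UNIV" using abs_summable_summable by simp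
    then show ?thesis by (intro tendsto_Re nat_partial_lim)
  qed
  have tlY: "YY h m t (\<lambda>j. - sx x j) (2*N) = (\<lambda>i. m i + of_real t * h i - (if 0 \<le> i \<and> i < int N then x i else 0))"
    for m t x N
    unfolding YY_def lin_neg lin_sx by simp
  have reM: "Re (\<Sum>\<^sub>\<infinity>k. \<phi> k * m (int k)) = 0" if m: "m \<in> M" for m
  proof -
    have mA: "m \<in> Aplus" using m MA by auto
    have b: "norm (Re (\<Sum>k<N. \<phi> k * m (int k))) \<le> Wnorm (tl_of m N)" for N
    proof -
      have "\<bar>0 * d + (\<Sum>j<2*N. (- sx m j) * A j)\<bar> \<le> Wnorm (YY h m 0 (\<lambda>j. - sx m j) (2*N))"
        by (rule G1[OF m])
      moreover have "YY h m 0 (\<lambda>j. - sx m j) (2*N) = tl_of m N"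
        unfolding tlY tl_of_def by auto
      moreover have "(\<Sum>j<2*N. (- sx m j) * A j) = - Re (\<Sum>k<N. \<phi> k * m (int k))"
        unfolding \<phi>_def sum_sx[symmetric] by (simp add: sum_negf)
      ultimately show ?thesis by simp
    qed
    have "(\<lambda>N. Re (\<Sum>k<N. \<phi> k * m (int k))) \<longlonglongrightarrow> 0"
      by (rule Lim_null_comparison[OF _ tail_lim[OF mA]]) (use b in auto)
    then show ?thesis using lim[OF Aplus_W[OF mA]] LIMSEQ_unique by blast
  qed
  have Mz: "(\<Sum>\<^sub>\<infinity>k. \<phi> k * m (int k)) = 0" if m: "m \<in> M" for m
  proof -
    have "Re (\<Sum>\<^sub>\<infinity>k. \<phi> k * (\<i> * m (int k))) = 0" using reM[OF Mscale[OF m, of \<i>]] by simp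
    then have "Im (\<Sum>\<^sub>\<infinity>k. \<phi> k * m (int k)) = 0"
      by (simp add: mult.left_commute[of "\<phi> _" \<i>] infsum_cmult_right')
    then show ?thesis using reM[OF m] by (simp add: complex_eq_iff)
  qed
  have reh: "Re (\<Sum>\<^sub>\<infinity>k. \<phi> k * h (int k)) = d"
  proof -
    have b: "norm (Re (\<Sum>k<N. \<phi> k * h (int k)) - d) \<le> Wnorm (tl_of h N)" for N
    proof -
      have "\<bar>1 * d + (\<Sum>j<2*N. (- sx h j) * A j)\<bar> \<le> Wnorm (YY h (\<lambda>n. 0) 1 (\<lambda>j. - sx h j) (2*N))"
        by (rule G1[OF M0])
      moreover have "YY h (\<lambda>n. 0) 1 (\<lambda>j. - sx h j) (2*N) = tl_of h N"
        unfolding tlY tl_of_def by auto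
      moreover have "(\<Sum>j<2*N. (- sx h j) * A j) = - Re (\<Sum>k<N. \<phi> k * h (int k))"
        unfolding \<phi>_def sum_sx[symmetric] by (simp add: sum_negf)
      ultimately show ?thesis by simp
    qed
    have "(\<lambda>N. Re (\<Sum>k<N. \<phi> k * h (int k)) - d) \<longlonglongrightarrow> 0"
      by (rule Lim_null_comparison[OF _ tail_lim[OF hA]]) (use b in auto)
    then have "(\<lambda>N. Re (\<Sum>k<N. \<phi> k * h (int k))) \<longlonglongrightarrow> d"
      using Lim_null by (simp add: LIM_zero_iff)
    then show ?thesis using lim[OF Aplus_W[OF hA]] LIMSEQ_unique by blast
  qed
  show ?thesis
    using pb Mz reh dpos by (intro exI[of _ \<phi>]) auto
qed

end

lemma HB:
  assumes IA: "I \<subseteq> Aplus" and I0: "(\<lambda>n. 0) \<in> I"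
    and Iadd: "\<And>a b. a \<in> I \<Longrightarrow> b \<in> I \<Longrightarrow> (\<lambda>n. a n + b n) \<in> I"
    and Iscale: "\<And>c a. a \<in> I \<Longrightarrow> (\<lambda>n. c * a n) \<in> I"
    and hA: "h \<in> Aplus" and dpos: "0 < d"
    and dist: "\<And>m. m \<in> I \<Longrightarrow> d \<le> Wnorm (\<lambda>n. m n + h n)"
  shows "\<exists>\<phi>. (\<forall>k. norm (\<phi> k) \<le> 2) \<and> (\<forall>m\<in>I. (\<Sum>\<^sub>\<infinity>k. \<phi> k * m (int k)) = 0)
          \<and> (\<Sum>\<^sub>\<infinity>k. \<phi> k * h (int k)) \<noteq> 0"
proof -
  interpret HBset I h d
    using assms Aplus_W by unfold_locales auto
  obtain A where "\<And>N. good I h d A N" using good_seq by blast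
  then show ?thesis using HB2 IA hA by blast
qed


lemma T_add: assumes "\<And>n. norm (\<phi> n) \<le> B" "x \<in> Wiener" "y \<in> Wiener"
  shows "T \<phi> (\<lambda>i. x i + y i) j = T \<phi> x j + T \<phi> y j"
proof -
  have "(\<lambda>n. norm (\<phi> n * x (int n - j))) summable_on UNIV"
    by (rule T_summ(1)) (use assms in auto)
  then have sx: "(\<lambda>n. \<phi> n * x (int n - j)) summable_on UNIV"
    by (rule abs_summable_summable)
  have "(\<lambda>n. norm (\<phi> n * y (int n - j))) summable_on UNIV"
    by (rule T_summ(1)) (use assms in auto)
  then have sy: "(\<lambda>n. \<phi> n * y (int n - j)) summable_on UNIV"
    by (rule abs_summable_summable)
  show ?thesis unfolding T_def using infsum_add[OF sx sy] by (simp add: algebra_simps)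
qed

lemma T_scale: "T \<phi> (\<lambda>i. c * x i) j = c * T \<phi> x j"
  unfolding T_def by (simp add: infsum_cmult_right'[symmetric] mult.left_commute)

lemma T_zero: "T \<phi> (\<lambda>i. 0) j = 0"
  unfolding T_def by simp

lemma T_bound: assumes "\<And>n. norm (\<phi> n) \<le> B" "x \<in> Wiener"
  shows "norm (T \<phi> x j) \<le> B * Wnorm x"
  by (rule T_summ(2)[OF assms])

lemma shift_lim:
  fixes F :: "int \<Rightarrow> 'a::topological_space"
  assumes "(\<lambda>m. F (int m)) \<longlonglongrightarrow> l"
  shows "(\<lambda>m. F (int m + c)) \<longlonglongrightarrow> l"
proof -
  have fl: "filterlim (\<lambda>m. nat (int m + c)) sequentially sequentially"
    unfolding filterlim_at_top
  proof
    fix Z :: nat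
    show "eventually (\<lambda>m. Z \<le> nat (int m + c)) sequentially"
      unfolding eventually_sequentially by (rule exI[of _ "Z + nat (- c)"]) auto
  qed
  have "(\<lambda>m. F (int (nat (int m + c)))) \<longlonglongrightarrow> l"
    using filterlim_compose[OF assms fl] .
  moreover have "eventually (\<lambda>m. F (int (nat (int m + c))) = F (int m + c)) sequentially"
    unfolding eventually_sequentially by (rule exI[of _ "nat (- c)"]) auto
  ultimately show ?thesis by (rule Lim_transform_eventually)
qed

lemma infsum_int_suminf:
  fixes a :: "int \<Rightarrow> 'a::banach"
  assumes "a summable_on UNIV"
  shows "infsum a UNIV = suminf (\<lambda>n. a (int_decode n))"
proof -
  have "infsum a UNIV = infsum (\<lambda>n. a (int_decode n)) UNIV"
    using infsum_reindex_bij_betw[OF bij_int_decode, of a] by simp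
  moreover have "(\<lambda>n. a (int_decode n)) summable_on UNIV"
    using summable_on_reindex_bij_betw[OF bij_int_decode, of a] assms by simp
  ultimately show ?thesis
    using has_sum_imp_sums[OF has_sum_infsum] sums_unique by metis
qed

lemma conv_dom:
  assumes B: "\<And>n. norm (\<phi> n) \<le> B" and g: "g \<in> Wiener" and x: "x \<in> Wiener"
    and lim: "(\<lambda>m. T \<phi> x (int m)) \<longlonglongrightarrow> 0"
  shows "(\<lambda>m. \<Sum>\<^sub>\<infinity>k. g k * T \<phi> x (int m + k)) \<longlonglongrightarrow> 0"
proof -
  define K where "K = B * Wnorm x"
  have Tb: "norm (T \<phi> x j) \<le> K" for j unfolding K_def by (rule T_bound[OF B x])
  have gs: "(\<lambda>k. norm (g k)) summable_on UNIV" using g unfolding Wiener_def by simp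
  have ags: "(\<lambda>k. norm (g k * T \<phi> x (int m + k))) summable_on UNIV" for m
    using summable_on_cmult_left[OF gs, of K]
    by (rule summable_on_comparison_test) (auto simp: norm_mult intro!: mult_left_mono Tb)
  have eq: "(\<Sum>\<^sub>\<infinity>k. g k * T \<phi> x (int m + k)) = (\<Sum>n. g (int_decode n) * T \<phi> x (int m + int_decode n))" for m
    using infsum_int_suminf[OF abs_summable_summable[OF ags[of m]]] by simp
  have Ms: "summable (\<lambda>n. norm (g (int_decode n)) * K)"
  proof -
    have "(\<lambda>n. norm (g (int_decode n))) summable_on UNIV"
      using summable_on_reindex_bij_betw[OF bij_int_decode, of "\<lambda>k. norm (g k)"] gs by simp
    then have "(\<lambda>n. norm (g (int_decode n)) * K) summable_on UNIV" by (rule summable_on_cmult_left)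
    then show ?thesis by (rule summable_on_imp_summable)
  qed
  have "(\<lambda>m. \<Sum>n. g (int_decode n) * T \<phi> x (int m + int_decode n)) \<longlonglongrightarrow> (\<Sum>n. (0::complex))"
  proof (rule tannerys_theorem[THEN conjunct2, THEN conjunct2])
    fix n
    show "(\<lambda>m. g (int_decode n) * T \<phi> x (int m + int_decode n)) \<longlonglongrightarrow> 0"
      by (rule tendsto_mult_right_zero[OF shift_lim[OF lim]])
  next
    show "eventually (\<lambda>(n, m). norm (g (int_decode n) * T \<phi> x (int m + int_decode n)) \<le> norm (g (int_decode n)) * K) (at_top \<times>\<^sub>F sequentially)"
      by (intro always_eventually) (auto simp: norm_mult intro!: mult_left_mono Tb)
  qed (use Ms in auto)
  then show ?thesis unfolding eq by simp
qed

definition JJ :: "(nat \<Rightarrow> complex) \<Rightarrow> (int \<Rightarrow> complex) set" where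
  "JJ \<phi> = {x \<in> Wiener. (\<lambda>m. T \<phi> x (int m)) \<longlonglongrightarrow> 0}"

lemma conv_delta: "conv (\<lambda>i. if i = c then 1 else 0) x = (\<lambda>n. x (n - c))"
proof
  fix n
  have "conv (\<lambda>i. if i = c then 1 else 0) x n = (\<Sum>\<^sub>\<infinity>k\<in>{c}. (if k = c then 1 else 0) * x (n - k))"
    unfolding conv_def by (rule infsum_cong_neutral) auto
  then show "conv (\<lambda>i. if i = c then 1 else 0) x n = x (n - c)" by simp
qed

lemma delta_Aplus: "(\<lambda>i. if i = int m then 1 else 0) \<in> Aplus"
proof -
  have "(\<lambda>i. norm (if i = int m then (1::complex) else 0)) summable_on {int m}" by simp
  then have "(\<lambda>i. norm (if i = int m then (1::complex) else 0)) summable_on UNIV"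
    by (rule summable_on_cong_neutral[THEN iffD1, rotated -1]) auto
  then show ?thesis unfolding Aplus_def Wiener_def by auto
qed

lemma JJ_ideal:
  assumes B: "\<And>n. norm (\<phi> n) \<le> B" and I: "closed_ideal_Aplus I"
    and ann: "\<And>x. x \<in> I \<Longrightarrow> (\<Sum>\<^sub>\<infinity>k. \<phi> k * x (int k)) = 0"
  shows "closed_ideal_A (JJ \<phi>)" "I \<subseteq> JJ \<phi>"
proof -
  have B0: "0 \<le> B" using B[of 0] norm_ge_zero[of "\<phi> 0"] by linarith
  show "I \<subseteq> JJ \<phi>"
  proof
    fix x assume x: "x \<in> I"
    have xW: "x \<in> Wiener" using x I unfolding closed_ideal_Aplus_def Aplus_def by auto
    have "T \<phi> x (int m) = 0" for m
    proof -
      have "conv (\<lambda>i. if i = int m then 1 else 0) x \<in> I"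
        using I x delta_Aplus unfolding closed_ideal_Aplus_def by blast
      then have "(\<Sum>\<^sub>\<infinity>k. \<phi> k * x (int k - int m)) = 0"
        using ann unfolding conv_delta by blast
      then show ?thesis unfolding T_def .
    qed
    then show "x \<in> JJ \<phi>" unfolding JJ_def using xW by simp
  qed
  show "closed_ideal_A (JJ \<phi>)"
    unfolding closed_ideal_A_def
  proof (intro conjI ballI allI impI)
    show "JJ \<phi> \<subseteq> Wiener" unfolding JJ_def by auto
    show "(\<lambda>n. 0) \<in> JJ \<phi>" unfolding JJ_def by (simp add: T_zero Wiener_def)
  next
    fix a b assume a: "a \<in> JJ \<phi>" and b: "b \<in> JJ \<phi>"
    then show "(\<lambda>n. a n + b n) \<in> JJ \<phi>"
      unfolding JJ_def by (auto simp: T_add[OF B] W_add intro: tendsto_add_zero)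
  next
    fix c a assume a: "a \<in> JJ \<phi>"
    then show "(\<lambda>n. c * a n) \<in> JJ \<phi>"
      unfolding JJ_def by (auto simp: T_scale W_scale intro: tendsto_mult_right_zero)
  next
    fix g a assume g: "g \<in> Wiener" and a: "a \<in> JJ \<phi>"
    have aW: "a \<in> Wiener" and al: "(\<lambda>m. T \<phi> a (int m)) \<longlonglongrightarrow> 0" using a unfolding JJ_def by auto
    have "T \<phi> (conv g a) (int m) = (\<Sum>\<^sub>\<infinity>k. g k * T \<phi> a (int m + k))" for m
      unfolding T_def[of _ "conv g a"] using FUB[OF B g aW, where m = "int m"] by simp
    then show "conv g a \<in> JJ \<phi>"
      unfolding JJ_def using CONVW[OF g aW] conv_dom[OF B g aW al] by simp
  next
    show "Wclosed (JJ \<phi>)" unfolding Wclosed_def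
    proof (intro allI impI)
      fix xs a assume xs: "\<forall>k. xs k \<in> JJ \<phi>" and aW: "a \<in> Wiener"
        and conv: "(\<lambda>k. Wnorm (\<lambda>n. xs k n - a n)) \<longlonglongrightarrow> 0"
      have "(\<lambda>m. T \<phi> a (int m)) \<longlonglongrightarrow> 0"
        unfolding LIMSEQ_iff
      proof (intro allI impI)
        fix r :: real assume r: "0 < r"
        have rp: "r / (2 * (B + 1)) > 0" using r B0 by simp
        then obtain k where "\<forall>k'\<ge>k. norm (Wnorm (\<lambda>n. xs k' n - a n) - 0) < r / (2 * (B + 1))"
          using conv unfolding LIMSEQ_iff by blast
        then have "norm (Wnorm (\<lambda>n. xs k n - a n) - 0) < r / (2 * (B + 1))" by blast
        then have k: "Wnorm (\<lambda>n. xs k n - a n) < r / (2 * (B + 1))"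
          using Wnorm_nonneg[of "\<lambda>n. xs k n - a n"] by simp
        have xk: "xs k \<in> Wiener" "(\<lambda>m. T \<phi> (xs k) (int m)) \<longlonglongrightarrow> 0" using xs unfolding JJ_def by auto
        then obtain N where N: "\<And>m. m \<ge> N \<Longrightarrow> norm (T \<phi> (xs k) (int m)) < r / 2"
          unfolding LIMSEQ_iff using r by (metis half_gt_zero diff_zero)
        have "norm (T \<phi> a (int m)) < r" if m: "m \<ge> N" for m
        proof -
          have dW: "(\<lambda>n. a n - xs k n) \<in> Wiener" using aW xk by (intro W_diff)
          have "T \<phi> a (int m) = T \<phi> (xs k) (int m) + T \<phi> (\<lambda>n. a n - xs k n) (int m)"
            using T_add[OF B xk(1) dW, where j = "int m"] by simp
          then have "norm (T \<phi> a (int m)) \<le> norm (T \<phi> (xs k) (int m)) + norm (T \<phi> (\<lambda>n. a n - xs k n) (int m))"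
            by (simp add: norm_triangle_ineq)
          also have "norm (T \<phi> (\<lambda>n. a n - xs k n) (int m)) \<le> B * Wnorm (\<lambda>n. a n - xs k n)"
            by (rule T_bound[OF B dW])
          also have "B * Wnorm (\<lambda>n. a n - xs k n) \<le> (B + 1) * (r / (2 * (B + 1)))"
            using k B0 Wnorm_minus_commute[of a "xs k"]
            by (intro mult_mono) (auto simp: Wnorm_nonneg)
          also have "(B + 1) * (r / (2 * (B + 1))) = r / 2" using B0 by (simp add: field_simps)
          finally show ?thesis using N[OF m] by simp
        qed
        then show "\<exists>N. \<forall>m\<ge>N. norm (T \<phi> a (int m) - 0) < r" by auto
      qed
      then show "a \<in> JJ \<phi>" unfolding JJ_def using aW by simp
    qed
  qed
qed


lemma ID:
  assumes B: "\<And>n. norm (\<phi> n) \<le> B" and f: "f \<in> Wiener" and g: "g \<in> Aplus"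
  shows "(\<Sum>\<^sub>\<infinity>n. \<phi> n * conv f g (int n)) = (\<Sum>\<^sub>\<infinity>m. coeffs_plus g m * T \<phi> f (int m))"
proof -
  have gW: "g \<in> Wiener" using g by (rule Aplus_W)
  have "(\<Sum>\<^sub>\<infinity>n. \<phi> n * conv f g (int n)) = (\<Sum>\<^sub>\<infinity>n. \<phi> n * conv g f (int n - 0))"
    by (simp add: conv_comm)
  also have "\<dots> = (\<Sum>\<^sub>\<infinity>k. g k * T \<phi> f (0 + k))"
    by (rule FUB[OF B gW f])
  also have "\<dots> = (\<Sum>\<^sub>\<infinity>m. g (int m) * T \<phi> f (0 + int m))"
    by (rule int_nat_infsum) (use g in \<open>auto simp: Aplus_neg\<close>)
  finally show ?thesis by (simp add: coeffs_plus_def)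
qed

lemma ext_Aplus: assumes "x \<in> l1N"
  shows "(\<lambda>i. if 0 \<le> i then x (nat i) else 0) \<in> Aplus"
    and "coeffs_plus (\<lambda>i. if 0 \<le> i then x (nat i) else 0) = x"
proof -
  let ?g = "\<lambda>i::int. if 0 \<le> i then x (nat i) else 0"
  have xs: "(\<lambda>n. norm (x n)) summable_on UNIV" using assms unfolding l1N_def by simp
  have "(\<lambda>i. norm (?g i)) summable_on range int \<longleftrightarrow> ((\<lambda>i. norm (?g i)) \<circ> int) summable_on UNIV"
    by (rule summable_on_reindex) simp
  moreover have "((\<lambda>i. norm (?g i)) \<circ> int) = (\<lambda>n. norm (x n))" by (simp add: fun_eq_iff)
  ultimately have "(\<lambda>i. norm (?g i)) summable_on range int" using xs by simp
  then have "(\<lambda>i. norm (?g i)) summable_on UNIV"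
    by (rule summable_on_cong_neutral[THEN iffD1, rotated -1]) (auto simp: image_iff, presburger)
  then show "?g \<in> Aplus" unfolding Aplus_def Wiener_def by auto
  show "coeffs_plus ?g = x" by (simp add: coeffs_plus_def)
qed

lemma dist_pos:
  assumes I: "closed_ideal_Aplus I" and hW: "h \<in> Wiener" and hI: "h \<notin> I"
  shows "\<exists>d>0. \<forall>m\<in>I. d \<le> Wnorm (\<lambda>n. m n + h n)"
proof (rule ccontr)
  assume "\<not> ?thesis"
  then have "\<forall>k::nat. \<exists>m\<in>I. Wnorm (\<lambda>n. m n + h n) < 1 / (Suc k)"
    by (metis not_le of_nat_0_less_iff zero_less_Suc divide_pos_pos zero_less_one)
  then obtain ms where ms: "\<And>k. ms k \<in> I" "\<And>k. Wnorm (\<lambda>n. ms k n + h n) < 1 / (Suc k)"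
    by metis
  define xs where "xs k = (\<lambda>n. (-1) * ms k n)" for k
  have xsI: "\<forall>k. xs k \<in> I" using I ms(1) unfolding closed_ideal_Aplus_def xs_def by blast
  have eq: "Wnorm (\<lambda>n. xs k n - h n) = Wnorm (\<lambda>n. ms k n + h n)" for k
  proof -
    have "(\<lambda>n. xs k n - h n) = (\<lambda>n. (-1) * (ms k n + h n))" by (simp add: xs_def fun_eq_iff)
    then show ?thesis using Wnorm_scale[of "-1" "\<lambda>n. ms k n + h n"] by simp
  qed
  have "(\<lambda>k. Wnorm (\<lambda>n. xs k n - h n)) \<longlonglongrightarrow> 0"
  proof (rule Lim_null_comparison)
    show "eventually (\<lambda>k. norm (Wnorm (\<lambda>n. xs k n - h n)) \<le> 1 / real (Suc k)) sequentially"
      using ms(2) by (intro always_eventually) (auto simp: eq Wnorm_nonneg less_imp_le)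
    show "(\<lambda>k. 1 / real (Suc k)) \<longlonglongrightarrow> 0" by (rule LIMSEQ_inverse_real_of_nat[unfolded inverse_eq_divide])
  qed
  then have "h \<in> I" using I xsI hW unfolding closed_ideal_Aplus_def Wclosed_def by blast
  then show False using hI by simp
qed

theorem lemma3p1:
  fixes I :: "(int \<Rightarrow> complex) set" and f :: "int \<Rightarrow> complex"
  assumes "closed_ideal_Aplus I"
    and "f \<in> Aplus"
    and "f \<in> IA I"
  shows "closedin weakstar_l1N (coeffs_plus ` div_ideal I f)"
proof -
  note I = assms(1)
  have IA: "I \<subseteq> Aplus" using I unfolding closed_ideal_Aplus_def by simp
  have fW: "f \<in> Wiener" using assms(2) by (rule Aplus_W)
  define \<Phi> where "\<Phi> = {\<phi>. (\<exists>B. \<forall>n. norm (\<phi> n) \<le> B) \<and> (\<forall>x\<in>I. (\<Sum>\<^sub>\<infinity>k. \<phi> k * x (int k)) = 0)}"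
  define \<psi> where "\<psi> \<phi> = (\<lambda>m::nat. T \<phi> f (int m))" for \<phi>
  have psi0: "\<psi> \<phi> \<longlonglongrightarrow> 0" if phiP: "\<phi> \<in> \<Phi>" for \<phi>
  proof -
    obtain B where B: "\<And>n. norm (\<phi> n) \<le> B" and ann: "\<And>x. x \<in> I \<Longrightarrow> (\<Sum>\<^sub>\<infinity>k. \<phi> k * x (int k)) = 0"
      using phiP unfolding \<Phi>_def by blast
    have "f \<in> JJ \<phi>"
      using assms(3) JJ_ideal[OF B I ann] unfolding IA_def by blast
    then show ?thesis unfolding JJ_def \<psi>_def by simp
  qed
  define C where "C = {x. \<forall>\<phi>\<in>\<Phi>. (\<Sum>\<^sub>\<infinity>m. x m * \<psi> \<phi> m) = 0}"
  have seteq: "coeffs_plus ` div_ideal I f = C \<inter> l1N"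
  proof
    show "coeffs_plus ` div_ideal I f \<subseteq> C \<inter> l1N"
    proof
      fix y assume "y \<in> coeffs_plus ` div_ideal I f"
      then obtain g where g: "g \<in> Aplus" "conv f g \<in> I" and y: "y = coeffs_plus g"
        unfolding div_ideal_def by blast
      have "(\<lambda>n. norm (g (int n))) summable_on UNIV"
        using g(1) unfolding Aplus_def Wiener_def by (auto intro: int_nat_summable)
      then have "y \<in> l1N" unfolding l1N_def y coeffs_plus_def by simp
      moreover have "y \<in> C" unfolding C_def mem_Collect_eq
      proof (intro ballI)
        fix \<phi> assume "\<phi> \<in> \<Phi>"
        then obtain B where B: "\<And>n. norm (\<phi> n) \<le> B" and ann: "\<And>x. x \<in> I \<Longrightarrow> (\<Sum>\<^sub>\<infinity>k. \<phi> k * x (int k)) = 0"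
          unfolding \<Phi>_def by blast
        show "(\<Sum>\<^sub>\<infinity>m. y m * \<psi> \<phi> m) = 0"
          using ID[OF B fW g(1)] ann[OF g(2)] unfolding y \<psi>_def by simp
      qed
      ultimately show "y \<in> C \<inter> l1N" by simp
    qed
  next
    show "C \<inter> l1N \<subseteq> coeffs_plus ` div_ideal I f"
    proof
      fix x assume x: "x \<in> C \<inter> l1N"
      define g where "g = (\<lambda>i. if 0 \<le> i then x (nat i) else 0)"
      have gA: "g \<in> Aplus" and gx: "coeffs_plus g = x" using ext_Aplus x unfolding g_def by auto
      have hA: "conv f g \<in> Aplus" by (rule Aplus_conv[OF assms(2) gA])
      have "conv f g \<in> I"
      proof (rule ccontr)
        assume nI: "conv f g \<notin> I"
        obtain d where d: "d > 0" "\<And>m. m \<in> I \<Longrightarrow> d \<le> Wnorm (\<lambda>n. m n + conv f g n)"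
          using dist_pos[OF I Aplus_W[OF hA] nI] by blast
        obtain \<phi> where \<phi>: "\<forall>k. norm (\<phi> k) \<le> 2" "\<forall>m\<in>I. (\<Sum>\<^sub>\<infinity>k. \<phi> k * m (int k)) = 0"
          "(\<Sum>\<^sub>\<infinity>k. \<phi> k * conv f g (int k)) \<noteq> 0"
          using HB[OF IA _ _ _ hA d(1) d(2)] I unfolding closed_ideal_Aplus_def by blast
        have "\<phi> \<in> \<Phi>" unfolding \<Phi>_def using \<phi>(1,2) by blast
        then have "(\<Sum>\<^sub>\<infinity>m. x m * \<psi> \<phi> m) = 0" using x unfolding C_def by blast
        moreover have "(\<Sum>\<^sub>\<infinity>k. \<phi> k * conv f g (int k)) = (\<Sum>\<^sub>\<infinity>m. x m * \<psi> \<phi> m)"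
          using ID[of \<phi> 2 f g] \<phi>(1) fW gA unfolding gx \<psi>_def by simp
        ultimately show False using \<phi>(3) by simp
      qed
      then have "g \<in> div_ideal I f" unfolding div_ideal_def using gA by simp
      then show "x \<in> coeffs_plus ` div_ideal I f" using gx by force
    qed
  qed
  define BB :: "(nat \<Rightarrow> complex) set set" where "BB = {{x. (\<Sum>\<^sub>\<infinity>n. x n * c n) \<in> U} | c U. c \<longlonglongrightarrow> 0 \<and> open U}"
  have top: "topspace (topology_generated_by BB) = UNIV"
  proof -
    have "UNIV \<in> BB" unfolding BB_def
      by (rule CollectI, rule exI[of _ "\<lambda>n. 0"], rule exI[of _ UNIV]) simp
    then show ?thesis by auto
  qed
  have opn: "openin (topology_generated_by BB) (UNIV - C)"
  proof -
    have "UNIV - C = \<Union> {{x. (\<Sum>\<^sub>\<infinity>m. x m * \<psi> \<phi> m) \<in> - {0}} | \<phi>. \<phi> \<in> \<Phi>}"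
      unfolding C_def by auto
    also have "openin (topology_generated_by BB) \<dots>"
    proof (rule openin_Union)
      fix S assume "S \<in> {{x. (\<Sum>\<^sub>\<infinity>m. x m * \<psi> \<phi> m) \<in> - {0}} | \<phi>. \<phi> \<in> \<Phi>}"
      then obtain \<phi> where "\<phi> \<in> \<Phi>" and S: "S = {x. (\<Sum>\<^sub>\<infinity>m. x m * \<psi> \<phi> m) \<in> - {0}}" by blast
      then have "S \<in> BB" unfolding BB_def using psi0 by blast
      then show "openin (topology_generated_by BB) S" by (rule topology_generated_by_Basis)
    qed
    finally show ?thesis .
  qed
  have "closedin (topology_generated_by BB) C"
    unfolding closedin_def top using opn by simp
  then show ?thesis
    unfolding weakstar_l1N_def BB_def[symmetric] closedin_subtopology seteq by blast
qed

end
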